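(* Let $n$ be an even positive integer such that $n'=n/2$ is odd, and let $q$ be an odd prime power coprime to $n$. Then every orbit of the permutation $\tau_{n'}$ on the set $\mathbb{Z}_n/\mu_q$ of $q$-cosets has length $2$; in particular, Type-I duadic splittings of $\mathbb{Z}_n$ given by $\tau_{n'}$ exist.
   Context: $\mathbb{Z}_n=\mathbb{Z}/n\mathbb{Z}$. $\mu_q:\mathbb{Z}_n\to\mathbb{Z}_n$, $i\mapsto qi\bmod n$; the $q$-cosets are the orbits of $\mu_q$ on $\mathbb{Z}_n$, and $\mathbb{Z}_n/\mu_q$ is the set of $q$-cosets. For $t\in\mathbb{Z}_n$ with $qt\equiv t\pmod n$, $\tau_t:\mathbb{Z}_n\to\mathbb{Z}_n$, $i\mapsto i+t\bmod n$ (a $q$-translation); it maps $q$-cosets to $q$-cosets. Type-I duadic splittings of $\mathbb{Z}_n$ given by $\tau_t$ exist if there is a $\mu_q$-invariant subset $P\subseteq\mathbb{Z}_n$ (i.e. $\mu_q(P)=P$) such that $\mathbb{Z}_n=P\cup\tau_t(P)$ is a disjoint union. *)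

theory Defs
  imports "HOL-Computational_Algebra.Primes"
begin

text \<open>Z_n is represented by the residues {0..<n} of type nat.\<close>

definition Zn :: "nat \<Rightarrow> nat set" where
  "Zn n = {0..<n}"

definition mu :: "nat \<Rightarrow> nat \<Rightarrow> nat \<Rightarrow> nat" where
  "mu n q i = (q * i) mod n"

definition qcoset :: "nat \<Rightarrow> nat \<Rightarrow> nat \<Rightarrow> nat set" where
  "qcoset n q i = {(mu n q ^^ k) i | k. True}"

definition qcosets :: "nat \<Rightarrow> nat \<Rightarrow> nat set set" where
  "qcosets n q = qcoset n q ` Zn n"

definition tau :: "nat \<Rightarrow> nat \<Rightarrow> nat \<Rightarrow> nat" where
  "tau n t i = (i + t) mod n"

definition is_q_translation :: "nat \<Rightarrow> nat \<Rightarrow> nat \<Rightarrow> bool" where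
  "is_q_translation n q t \<longleftrightarrow> t \<in> Zn n \<and> (q * t) mod n = t mod n"

definition tau_set :: "nat \<Rightarrow> nat \<Rightarrow> nat set \<Rightarrow> nat set" where
  "tau_set n t C = tau n t ` C"

definition tau_orbit :: "nat \<Rightarrow> nat \<Rightarrow> nat set \<Rightarrow> nat set set" where
  "tau_orbit n t C = {(tau_set n t ^^ k) C | k. True}"

definition prime_power :: "nat \<Rightarrow> bool" where
  "prime_power q \<longleftrightarrow> (\<exists>p k. prime p \<and> k \<ge> 1 \<and> q = p ^ k)"

definition type_I_duadic_splitting :: "nat \<Rightarrow> nat \<Rightarrow> nat \<Rightarrow> nat set \<Rightarrow> bool" where
  "type_I_duadic_splitting n q t P \<longleftrightarrow>
     is_q_translation n q t \<and> P \<subseteq> Zn n \<and> mu n q ` P = P \<and>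
     P \<union> tau n t ` P = Zn n \<and> P \<inter> tau n t ` P = {}"

end

theory Submission
  imports Defs "HOL-Number_Theory.Cong"
begin

lemma par_mod: "even (n::nat) \<Longrightarrow> even (x mod n) \<longleftrightarrow> even x"
  by (metis dvd_mod_iff)

lemma mu_par: "even n \<Longrightarrow> odd q \<Longrightarrow> even (mu n q i) \<longleftrightarrow> even i"
  unfolding mu_def by (simp add: par_mod)

lemma mu_iter: "even n \<Longrightarrow> odd q \<Longrightarrow> 0 < n \<Longrightarrow> i < n \<Longrightarrow>
   (even ((mu n q ^^ k) i) \<longleftrightarrow> even i) \<and> (mu n q ^^ k) i < n"
proof (induction k)
  case 0 thus ?case by simp
next
  case (Suc k)
  have "(mu n q ^^ Suc k) i = mu n q ((mu n q ^^ k) i)" by simp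
  moreover have "mu n q ((mu n q ^^ k) i) < n" using Suc.prems(3) unfolding mu_def by simp
  ultimately show ?case using Suc mu_par[of n q "(mu n q ^^ k) i"] by simp
qed

lemma tau_par: "n = 2*m \<Longrightarrow> odd m \<Longrightarrow> even (tau n m i) \<longleftrightarrow> odd i"
  unfolding tau_def by (simp add: par_mod)

lemma tau_tau: "n = 2*m \<Longrightarrow> i < n \<Longrightarrow> tau n m (tau n m i) = i"
proof -
  assume a: "n = 2*m" "i < n"
  have "(i + m + m) = i + n" using a by simp
  moreover have "(i + n) mod n = i" using a(2) by simp
  ultimately have "(i + m + m) mod n = i" by metis
  thus ?thesis unfolding tau_def using a by (metis mod_add_left_eq)
qed

lemma tau_set_tau_set: "n = 2*m \<Longrightarrow> C \<subseteq> {0..<n} \<Longrightarrow> tau_set n m (tau_set n m C) = C"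
proof -
  assume a: "n = 2*m" "C \<subseteq> {0..<n}"
  have "(\<lambda>x. tau n m (tau n m x)) ` C = id ` C"
    by (rule image_cong) (use a tau_tau in auto)
  thus ?thesis unfolding tau_set_def image_image by simp
qed

lemma iter_tau: "n = 2*m \<Longrightarrow> C \<subseteq> {0..<n} \<Longrightarrow>
  (tau_set n m ^^ k) C = (if even k then C else tau_set n m C)"
  by (induction k) (auto simp: tau_set_tau_set)

theorem theorem4p5:
  fixes n q :: nat
  assumes "n > 0" and "even n" and "odd (n div 2)"
    and "prime_power q" and "odd q" and "coprime q n"
  shows "(\<forall>C \<in> qcosets n q. card (tau_orbit n (n div 2) C) = 2)
         \<and> (\<exists>P. type_I_duadic_splitting n q (n div 2) P)"
proof
  define m where "m = n div 2"
  have nm: "n = 2*m" using assms(2) m_def by simp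
  have om: "odd m" using assms(3) m_def by simp
  show "\<forall>C \<in> qcosets n q. card (tau_orbit n (n div 2) C) = 2"
  proof
    fix C assume "C \<in> qcosets n q"
    then obtain i where i: "i < n" "C = qcoset n q i" unfolding qcosets_def Zn_def by auto
    have Cp: "\<forall>x\<in>C. (even x \<longleftrightarrow> even i) \<and> x < n"
      using i mu_iter[OF assms(2) assms(5) assms(1) i(1)] unfolding qcoset_def by auto
    have iC: "i \<in> C" unfolding i qcoset_def by (auto intro: exI[of _ 0])
    have sub: "C \<subseteq> {0..<n}" using Cp by auto
    have ne: "C \<noteq> tau_set n m C"
    proof
      assume "C = tau_set n m C"
      then have "i \<in> tau_set n m C" using iC by simp
      then obtain x where x: "x \<in> C" "i = tau n m x" unfolding tau_set_def by auto
      have "even x \<longleftrightarrow> even i" using Cp x(1) by blast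
      moreover have "even i \<longleftrightarrow> odd x" using tau_par[OF nm om, of x] x(2) by simp
      ultimately show False by simp
    qed
    have "tau_orbit n m C = {C, tau_set n m C}"
      unfolding tau_orbit_def iter_tau[OF nm sub]
      by (auto intro: exI[of _ 0] exI[of _ 1])
    thus "card (tau_orbit n (n div 2) C) = 2" using ne m_def by simp
  qed
  define P where "P = {i. i < n \<and> even i}"
  have trans: "is_q_translation n q m"
  proof -
    obtain a where "q = 2*a+1" using assms(5) oddE by blast
    hence "q*m = a*n + m" using nm by simp
    thus ?thesis unfolding is_q_translation_def Zn_def using nm \<open>n>0\<close> by simp
  qed
  have inj: "inj_on (mu n q) P"
  proof
    fix x y assume "x \<in> P" "y \<in> P" "mu n q x = mu n q y"
    hence "[q*x = q*y] (mod n)" "x < n" "y < n" unfolding mu_def P_def cong_def by auto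
    hence "[x = y] (mod n)" using assms(6) cong_mult_lcancel_nat by blast
    thus "x = y" using \<open>x<n\<close> \<open>y<n\<close> unfolding cong_def by simp
  qed
  have musub: "mu n q ` P \<subseteq> P"
    using mu_par[OF assms(2) assms(5)] unfolding P_def by (auto simp: mu_def)
  have muP: "mu n q ` P = P"
  proof -
    have fin: "finite P" unfolding P_def by simp
    show ?thesis by (rule card_subset_eq[OF fin musub]) (rule card_image[OF inj])
  qed
  have tault: "\<And>x. tau n m x < n" unfolding tau_def using \<open>n>0\<close> by simp
  have tauP: "tau n m ` P = {i. i < n \<and> odd i}"
  proof
    show "tau n m ` P \<subseteq> {i. i < n \<and> odd i}"
    proof
      fix y assume "y \<in> tau n m ` P"
      then obtain x where x: "x \<in> P" "y = tau n m x" by blast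
      have "even x" using x(1) unfolding P_def by blast
      hence "odd y" using tau_par[OF nm om, of x] x(2) by simp
      thus "y \<in> {i. i < n \<and> odd i}" using tault x(2) by blast
    qed
    show "{i. i < n \<and> odd i} \<subseteq> tau n m ` P"
    proof
      fix j assume j: "j \<in> {i. i < n \<and> odd i}"
      have "even (tau n m j)" using j tau_par[OF nm om, of j] by blast
      hence "tau n m j \<in> P" using tault[of j] unfolding P_def by blast
      moreover have "tau n m (tau n m j) = j" using tau_tau[OF nm] j by blast
      ultimately show "j \<in> tau n m ` P" by (metis image_eqI)
    qed
  qed
  have "type_I_duadic_splitting n q m P"
  proof -
    have "P \<union> {i. i < n \<and> odd i} = {0..<n}" unfolding P_def by auto
    moreover have "P \<inter> {i. i < n \<and> odd i} = {}" unfolding P_def by auto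
    moreover have "P \<subseteq> {0..<n}" unfolding P_def by auto
    ultimately show ?thesis
      unfolding type_I_duadic_splitting_def Zn_def using trans muP tauP by simp
  qed
  thus "\<exists>P. type_I_duadic_splitting n q (n div 2) P" using m_def by auto
qed

end
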